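(* Let $m\ge2$ be an integer. There is a bijection $[\mathcal{A}_m]_m\to\mathcal{A}_m^m$, $\pi\mapsto(\lambda^{(1)},\ldots,\lambda^{(m)})$, such that $|\pi|=m\cdot(|\lambda^{(1)}|+\cdots+|\lambda^{(m)}|)$ and $\ell(\pi)=\ell(\lambda^{(1)})+\cdots+\ell(\lambda^{(m)})$. As a consequence, the numbers $a_m(n)$ defined by $\sum_{n\ge0}a_m(n)q^n=\prod_{k\ge0}(1+q^{m^k})^{m^k}$ form an $m$-convolutive sequence.
   Context: A colored $m$-ary strict partition is a finite set of parts, each part being a pair written $m^k_{c}$ with $k\ge0$ an integer and color $c\in\{1,\ldots,m^k\}$ (so no two parts share both the same size and the same color); the part $m^k_c$ has size $m^k$. The weight $|\pi|$ is the sum of the sizes of its parts and $\ell(\pi)$ is its number of parts. $\mathcal{A}_m$ denotes the set of colored $m$-ary strict partitions (including the empty one), and $[\mathcal{A}_m]_m$ the subset of those whose weight is divisible by $m$. A sequence $(a_n)_{n\ge0}$ is $m$-convolutive if $\sum_{n\ge0}a_{mn}q^n=\big(\sum_{n\ge0}a_nq^n\big)^m$. *)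

theory Defs
  imports "HOL-Computational_Algebra.Formal_Power_Series"
begin

text \<open>A part m^k_c is represented by the pair (k, c) with 1 \<le> c \<le> m^k.
  A colored m-ary strict partition is a finite set of such parts.\<close>

definition colored_parts :: "nat \<Rightarrow> (nat \<times> nat) set" where
  "colored_parts m = {(k, c). 1 \<le> c \<and> c \<le> m ^ k}"

definition A :: "nat \<Rightarrow> (nat \<times> nat) set set" where
  "A m = {\<pi>. finite \<pi> \<and> \<pi> \<subseteq> colored_parts m}"

definition weight :: "nat \<Rightarrow> (nat \<times> nat) set \<Rightarrow> nat" where
  "weight m \<pi> = (\<Sum>p\<in>\<pi>. m ^ fst p)"

definition len :: "(nat \<times> nat) set \<Rightarrow> nat" where
  "len \<pi> = card \<pi>"

definition A_div :: "nat \<Rightarrow> (nat \<times> nat) set set" where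
  "A_div m = {\<pi> \<in> A m. m dvd weight m \<pi>}"

definition A_tuples :: "nat \<Rightarrow> (nat \<times> nat) set list set" where
  "A_tuples m = {ls. length ls = m \<and> set ls \<subseteq> A m}"

text \<open>Coefficients of the infinite product prod_{k>=0} (1+q^{m^k})^{m^k}.
  For m \<ge> 2 the factors with k > n are 1 + O(q^{n+1}), so the n-th coefficient
  of the infinite product equals that of the finite product over k \<le> n.\<close>
definition a :: "nat \<Rightarrow> nat \<Rightarrow> nat" where
  "a m n = fps_nth (\<Prod>k\<le>n. (1 + fps_X ^ (m ^ k)) ^ (m ^ k) :: nat fps) n"

definition m_convolutive :: "nat \<Rightarrow> (nat \<Rightarrow> nat) \<Rightarrow> bool" where
  "m_convolutive m s \<longleftrightarrow> Abs_fps (\<lambda>n. s (m * n)) = (Abs_fps s) ^ m"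

end

theory Submission
  imports Defs
begin


definition hmap :: "nat \<Rightarrow> nat \<Rightarrow> nat \<times> nat \<Rightarrow> nat \<times> nat" where
  "hmap m i x = (Suc (fst x), snd x + i * m ^ fst x)"

definition gmap :: "nat \<Rightarrow> (nat \<times> nat) set list \<Rightarrow> (nat \<times> nat) set" where
  "gmap m ls = (\<Union>i<m. hmap m i ` (ls ! i))"

lemma key_div:
  fixes M c d i j :: nat
  assumes "0 < M" "1 \<le> c" "c \<le> M" "1 \<le> d" "d \<le> M" "c + i * M = d + j * M"
  shows "i = j \<and> c = d"
proof -
  have "(c - 1 + i * M) div M = i + (c - 1) div M" using div_mult_self1[of M "c - 1" i] assms(1) by linarith
  moreover have "(d - 1 + j * M) div M = j + (d - 1) div M" using div_mult_self1[of M "d - 1" j] assms(1) by linarith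
  moreover have "(c - 1) div M = 0" "(d - 1) div M = 0" using assms by auto
  moreover have "c - 1 + i * M = d - 1 + j * M" using assms by linarith
  ultimately have "i = j" by simp
  then show ?thesis using assms by simp
qed

lemma hmap_inj_global: "inj (hmap m i)"
  by (auto simp: inj_def hmap_def prod_eq_iff)

lemma hmap_eq:
  assumes "m > 0" "x \<in> colored_parts m" "y \<in> colored_parts m" "hmap m i x = hmap m j y"
  shows "i = j \<and> x = y"
proof -
  obtain k c where x: "x = (k, c)" by (cases x)
  obtain k' d where y: "y = (k', d)" by (cases y)
  have kk: "k = k'" using assms(4) x y by (simp add: hmap_def)
  have "c + i * m ^ k = d + j * m ^ k" using assms(4) x y kk by (simp add: hmap_def)
  moreover have "1 \<le> c" "c \<le> m ^ k" "1 \<le> d" "d \<le> m ^ k"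
    using assms(2,3) x y kk by (auto simp: colored_parts_def)
  ultimately have "i = j \<and> c = d" using key_div[of "m ^ k" c d i j] assms(1) by simp
  then show ?thesis using x y kk by simp
qed

lemma tuples_nth:
  assumes "ls \<in> A_tuples m" "i < m"
  shows "ls ! i \<in> A m"
  using assms by (auto simp: A_tuples_def)

lemma A_sub: "\<pi> \<in> A m \<Longrightarrow> \<pi> \<subseteq> colored_parts m" and A_fin: "\<pi> \<in> A m \<Longrightarrow> finite \<pi>"
  by (auto simp: A_def)

lemma mem_gmap:
  assumes "m > 0" "ls \<in> A_tuples m" "i < m" "x \<in> colored_parts m"
  shows "hmap m i x \<in> gmap m ls \<longleftrightarrow> x \<in> ls ! i"
proof
  assume "hmap m i x \<in> gmap m ls"
  then obtain j y where j: "j < m" "y \<in> ls ! j" "hmap m i x = hmap m j y"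
    by (auto simp: gmap_def)
  then have "y \<in> colored_parts m" using A_sub[OF tuples_nth[OF assms(2) j(1)]] by blast
  then have "i = j \<and> x = y" using hmap_eq[OF assms(1) assms(4) _ j(3)] by blast
  then show "x \<in> ls ! i" using j by simp
next
  assume "x \<in> ls ! i" then show "hmap m i x \<in> gmap m ls" using assms(3) by (auto simp: gmap_def)
qed

lemma gmap_inj:
  assumes "m > 0"
  shows "inj_on (gmap m) (A_tuples m)"
proof (rule inj_onI)
  fix ls ls' assume ls: "ls \<in> A_tuples m" and ls': "ls' \<in> A_tuples m" and eq: "gmap m ls = gmap m ls'"
  show "ls = ls'"
  proof (rule nth_equalityI)
    show "length ls = length ls'" using ls ls' by (simp add: A_tuples_def)
    fix i assume "i < length ls"
    then have i: "i < m" using ls by (simp add: A_tuples_def)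
    have s1: "ls ! i \<subseteq> colored_parts m" using A_sub[OF tuples_nth[OF ls i]] .
    have s2: "ls' ! i \<subseteq> colored_parts m" using A_sub[OF tuples_nth[OF ls' i]] .
    show "ls ! i = ls' ! i"
    proof (intro equalityI subsetI)
      fix x assume x: "x \<in> ls ! i"
      then have "x \<in> colored_parts m" using s1 by blast
      then show "x \<in> ls' ! i" using mem_gmap[OF assms ls i] mem_gmap[OF assms ls' i] eq x by blast
    next
      fix x assume x: "x \<in> ls' ! i"
      then have "x \<in> colored_parts m" using s2 by blast
      then show "x \<in> ls ! i" using mem_gmap[OF assms ls i] mem_gmap[OF assms ls' i] eq x by blast
    qed
  qed
qed

lemma weight_dvd:
  assumes "\<forall>p\<in>\<pi>. fst p \<ge> 1"
  shows "m dvd weight m \<pi>"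
  unfolding weight_def
proof (rule dvd_sum)
  fix p assume "p \<in> \<pi>"
  then have "fst p \<ge> 1" using assms by blast
  then show "m dvd m ^ fst p" by (simp add: dvd_power)
qed

lemma hmap_colored:
  assumes "x \<in> colored_parts m" "i < m"
  shows "hmap m i x \<in> colored_parts m"
proof -
  obtain k c where x: "x = (k, c)" by (cases x)
  have c: "1 \<le> c" "c \<le> m ^ k" using assms x by (auto simp: colored_parts_def)
  have "c + i * m ^ k \<le> m ^ k + i * m ^ k" using c by simp
  also have "\<dots> = Suc i * m ^ k" by simp
  also have "\<dots> \<le> m * m ^ k" using assms(2) by (intro mult_le_mono1) simp
  finally show ?thesis using x c by (simp add: hmap_def colored_parts_def)
qed

lemma gmap_in:
  assumes "ls \<in> A_tuples m"
  shows "gmap m ls \<in> A_div m"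
proof -
  have fin: "finite (gmap m ls)" unfolding gmap_def
    using A_fin[OF tuples_nth[OF assms]] by auto
  have sub: "gmap m ls \<subseteq> colored_parts m" unfolding gmap_def
    using A_sub[OF tuples_nth[OF assms]] hmap_colored by blast
  have "\<forall>p\<in>gmap m ls. fst p \<ge> 1" by (auto simp: gmap_def hmap_def)
  then show ?thesis using fin sub weight_dvd by (auto simp: A_div_def A_def)
qed

lemma A_div_pos:
  assumes "m \<ge> 2" "\<pi> \<in> A_div m" "p \<in> \<pi>"
  shows "fst p \<ge> 1"
proof (rule ccontr)
  assume "\<not> fst p \<ge> 1"
  then have "fst p = 0" by simp
  moreover have "p \<in> colored_parts m" using assms(2,3) by (auto simp: A_div_def A_def)
  ultimately have p: "p = (0, 1)" by (cases p) (auto simp: colored_parts_def)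
  have fin: "finite \<pi>" using assms(2) by (auto simp: A_div_def A_def)
  have rest: "\<forall>q\<in>\<pi> - {p}. fst q \<ge> 1"
  proof
    fix q assume q: "q \<in> \<pi> - {p}"
    then have "q \<in> colored_parts m" using assms(2) by (auto simp: A_div_def A_def)
    obtain a b where qab: "q = (a, b)" by (cases q)
    show "fst q \<ge> 1"
    proof (rule ccontr)
      assume "\<not> fst q \<ge> 1"
      then have "a = 0" using qab by simp
      then have "b = 1" using \<open>q \<in> colored_parts m\<close> qab by (auto simp: colored_parts_def)
      then show False using q p qab \<open>a = 0\<close> by simp
    qed
  qed
  have "weight m \<pi> = m ^ fst p + weight m (\<pi> - {p})"
    unfolding weight_def using sum.remove[OF fin assms(3)] by simp
  then have "weight m \<pi> = 1 + weight m (\<pi> - {p})" using p by simp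
  moreover have "m dvd weight m (\<pi> - {p})" using weight_dvd[OF rest] .
  moreover have "m dvd weight m \<pi>" using assms(2) by (simp add: A_div_def)
  ultimately have "m dvd 1" by (metis dvd_add_left_iff)
  then show False using assms(1) by simp
qed

lemma gmap_surj:
  assumes "m \<ge> 2" "\<pi> \<in> A_div m"
  shows "\<pi> \<in> gmap m ` A_tuples m"
proof -
  define ls where "ls = map (\<lambda>i. {x \<in> colored_parts m. hmap m i x \<in> \<pi>}) [0..<m]"
  have fin: "finite \<pi>" and sub: "\<pi> \<subseteq> colored_parts m" using assms(2) by (auto simp: A_div_def A_def)
  have "ls \<in> A_tuples m"
  proof -
    have "finite {x \<in> colored_parts m. hmap m i x \<in> \<pi>}" for i
      by (rule finite_subset[OF _ finite_vimageI[OF fin hmap_inj_global]]) auto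
    then show ?thesis by (auto simp: ls_def A_tuples_def A_def)
  qed
  moreover have "gmap m ls = \<pi>"
  proof (intro equalityI subsetI)
    fix y assume "y \<in> gmap m ls" then show "y \<in> \<pi>" by (auto simp: gmap_def ls_def)
  next
    fix y assume y: "y \<in> \<pi>"
    obtain K C where yK: "y = (K, C)" by (cases y)
    have "K \<ge> 1" using A_div_pos[OF assms y] yK by simp
    then obtain k where K: "K = Suc k" by (cases K) auto
    have C: "1 \<le> C" "C \<le> m ^ Suc k" using sub y yK K by (auto simp: colored_parts_def)
    define M where "M = m ^ k"
    have M0: "M > 0" using assms(1) by (simp add: M_def)
    define i where "i = (C - 1) div M"
    define c where "c = (C - 1) mod M + 1"
    have "C - 1 < m * M" using C by (simp add: M_def)
    then have im: "i < m" unfolding i_def using M0 by (simp add: div_less_iff_less_mult)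
    have cC: "c + i * M = C" unfolding c_def i_def using C(1) by (metis add.commute add.left_commute le_add_diff_inverse mod_div_mult_eq)
    have c1: "1 \<le> c" "c \<le> M" unfolding c_def using M0 by (auto simp: Suc_le_eq)
    have hy: "hmap m i (k, c) = y" using cC yK K by (simp add: hmap_def M_def)
    have "(k, c) \<in> colored_parts m" using c1 by (simp add: colored_parts_def M_def)
    then have "(k, c) \<in> ls ! i" using hy y im by (simp add: ls_def)
    then show "y \<in> gmap m ls" using hy im unfolding gmap_def by blast
  qed
  ultimately show ?thesis by blast
qed

lemma gmap_bij:
  assumes "m \<ge> 2"
  shows "bij_betw (gmap m) (A_tuples m) (A_div m)"
  unfolding bij_betw_def using gmap_inj[of m] assms gmap_in gmap_surj[OF assms] by auto

lemma gmap_disj: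
  assumes "m > 0" "ls \<in> A_tuples m" "i < m" "j < m" "i \<noteq> j"
  shows "hmap m i ` (ls ! i) \<inter> hmap m j ` (ls ! j) = {}"
  using hmap_eq[OF assms(1)] A_sub[OF tuples_nth[OF assms(2,3)]] A_sub[OF tuples_nth[OF assms(2,4)]] assms(5)
  by blast

lemma gmap_weight:
  assumes "m > 0" "ls \<in> A_tuples m"
  shows "weight m (gmap m ls) = m * (\<Sum>l\<leftarrow>ls. weight m l)"
proof -
  have len: "length ls = m" using assms(2) by (simp add: A_tuples_def)
  have "weight m (gmap m ls) = (\<Sum>i<m. weight m (hmap m i ` (ls ! i)))"
    unfolding weight_def gmap_def
    by (rule sum.UNION_disjoint) (use A_fin[OF tuples_nth[OF assms(2)]] gmap_disj[OF assms] in auto)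
  also have "\<dots> = (\<Sum>i<m. m * weight m (ls ! i))"
  proof (rule sum.cong[OF refl])
    fix i assume "i \<in> {..<m}"
    have "weight m (hmap m i ` (ls ! i)) = (\<Sum>x\<in>ls ! i. m ^ fst (hmap m i x))"
      unfolding weight_def by (rule sum.reindex[unfolded comp_def]) (meson hmap_inj_global inj_on_subset subset_UNIV)
    also have "\<dots> = m * weight m (ls ! i)" by (simp add: weight_def hmap_def sum_distrib_left)
    finally show "weight m (hmap m i ` (ls ! i)) = m * weight m (ls ! i)" .
  qed
  also have "\<dots> = m * (\<Sum>i<m. weight m (ls ! i))" by (simp add: sum_distrib_left)
  also have "(\<Sum>i<m. weight m (ls ! i)) = (\<Sum>l\<leftarrow>ls. weight m l)"
    using len by (simp add: sum_list_sum_nth atLeast0LessThan)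
  finally show ?thesis .
qed

lemma gmap_len:
  assumes "m > 0" "ls \<in> A_tuples m"
  shows "len (gmap m ls) = (\<Sum>l\<leftarrow>ls. len l)"
proof -
  have len: "length ls = m" using assms(2) by (simp add: A_tuples_def)
  have "len (gmap m ls) = (\<Sum>i<m. card (hmap m i ` (ls ! i)))"
    unfolding len_def gmap_def
    by (rule card_UN_disjoint) (use A_fin[OF tuples_nth[OF assms(2)]] gmap_disj[OF assms] in auto)
  also have "\<dots> = (\<Sum>i<m. len (ls ! i))"
    by (rule sum.cong[OF refl]) (simp add: len_def card_image inj_on_subset[OF hmap_inj_global])
  also have "\<dots> = (\<Sum>l\<leftarrow>ls. len l)"
    using len by (simp add: sum_list_sum_nth atLeast0LessThan)
  finally show ?thesis .
qed

lemma part1: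
  assumes "m \<ge> 2"
  shows "\<exists>f. bij_betw f (A_div m) (A_tuples m) \<and>
            (\<forall>\<pi>\<in>A_div m. weight m \<pi> = m * (\<Sum>l\<leftarrow>f \<pi>. weight m l) \<and>
                           len \<pi> = (\<Sum>l\<leftarrow>f \<pi>. len l))"
proof (intro exI conjI ballI)
  let ?f = "inv_into (A_tuples m) (gmap m)"
  have b: "bij_betw (gmap m) (A_tuples m) (A_div m)" using gmap_bij[OF assms] .
  show "bij_betw ?f (A_div m) (A_tuples m)" using bij_betw_inv_into[OF b] .
  fix \<pi> assume p: "\<pi> \<in> A_div m"
  have img: "gmap m ` A_tuples m = A_div m" using b by (simp add: bij_betw_def)
  have in1: "?f \<pi> \<in> A_tuples m" using inv_into_into[of \<pi> "gmap m" "A_tuples m"] p img by simp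
  have eq: "gmap m (?f \<pi>) = \<pi>" using f_inv_into_f[of \<pi> "gmap m" "A_tuples m"] p img by simp
  have m0: "m > 0" using assms by simp
  show "weight m \<pi> = m * (\<Sum>l\<leftarrow>?f \<pi>. weight m l)" using gmap_weight[OF m0 in1] eq by simp
  show "len \<pi> = (\<Sum>l\<leftarrow>?f \<pi>. len l)" using gmap_len[OF m0 in1] eq by simp
qed



unbundle fps_syntax

definition Phi :: "nat fps \<Rightarrow> int fps" where
  "Phi f = Abs_fps (\<lambda>n. int (f $ n))"

lemma Phi_nth[simp]: "Phi f $ n = int (f $ n)" by (simp add: Phi_def)
lemma Phi_mult: "Phi (f * g) = Phi f * Phi g"
  by (rule fps_ext) (simp add: fps_mult_nth of_nat_sum)
lemma Phi_add: "Phi (f + g) = Phi f + Phi g" by (rule fps_ext) simp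
lemma Phi_one: "Phi 1 = 1" by (rule fps_ext) simp
lemma Phi_X: "Phi fps_X = fps_X" by (rule fps_ext) (simp add: fps_X_def)
lemma Phi_power: "Phi (f ^ n) = Phi f ^ n"
  by (induction n) (simp_all add: Phi_one Phi_mult)
lemma Phi_prod: "Phi (\<Prod>k\<in>S. f k) = (\<Prod>k\<in>S. Phi (f k))"
  by (induction S rule: infinite_finite_induct) (simp_all add: Phi_one Phi_mult)
lemma Phi_inj: "Phi f = Phi g \<Longrightarrow> f = g"
  by (rule fps_ext) (metis Phi_nth of_nat_eq_iff)

definition agree :: "'a::comm_semiring_1 fps \<Rightarrow> 'a fps \<Rightarrow> nat \<Rightarrow> bool" where
  "agree f g n \<longleftrightarrow> (\<forall>i\<le>n. f $ i = g $ i)"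

lemma agree_mult: "agree f f' n \<Longrightarrow> agree g g' n \<Longrightarrow> agree (f * g) (f' * g') n"
  unfolding agree_def by (auto simp: fps_mult_nth intro!: sum.cong)

lemma agree_power: "agree f f' n \<Longrightarrow> agree (f ^ k) (f' ^ k) n"
proof (induction k)
  case 0 then show ?case by (simp add: agree_def)
next
  case (Suc k)
  then have "agree (f * f ^ k) (f' * f' ^ k) n" by (intro agree_mult)
  then show ?case by simp
qed

lemma agree_one_X: "n < M \<Longrightarrow> agree ((1 + fps_X ^ M) ^ e) (1 :: 'a::comm_semiring_1 fps) n"
proof (induction e)
  case 0 then show ?case by (simp add: agree_def)
next
  case (Suc e)
  have eq: "((1 + fps_X ^ M) ^ Suc e) = (1 + fps_X ^ M) ^ e + fps_X ^ M * (1 + fps_X ^ M) ^ e"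
    by (simp add: algebra_simps)
  show ?case unfolding eq using Suc by (auto simp: agree_def fps_X_power_mult_nth)
qed

definition F :: "nat \<Rightarrow> nat \<Rightarrow> int fps" where
  "F m N = (\<Prod>k\<le>N. (1 + fps_X ^ (m ^ k)) ^ (m ^ k))"

lemma a_F: "int (a m n) = F m n $ n"
proof -
  have "Phi (\<Prod>k\<le>n. (1 + fps_X ^ (m ^ k)) ^ (m ^ k)) = F m n"
    by (simp add: F_def Phi_prod Phi_power Phi_add Phi_one Phi_X)
  then show ?thesis unfolding a_def by (metis Phi_nth)
qed

lemma F_stab:
  assumes "m \<ge> 2" "n \<le> N"
  shows "F m N $ n = F m n $ n"
  using assms(2)
proof (induction N rule: dec_induct)
  case base then show ?case by simp
next
  case (step N)
  have "n < 2 ^ Suc N" using step(1) less_exp[of "Suc N"] by linarith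
  also have "(2::nat) ^ Suc N \<le> m ^ Suc N" by (rule power_mono) (use assms(1) in auto)
  finally have "n < m ^ Suc N" .
  then have "agree (F m N * (1 + fps_X ^ (m ^ Suc N)) ^ (m ^ Suc N)) (F m N * 1) n"
    by (intro agree_mult agree_one_X) (simp_all add: agree_def)
  then have "F m (Suc N) $ n = F m N $ n" by (simp add: F_def agree_def)
  then show ?case using step by simp
qed

lemma compose_Xm_nth:
  assumes "m > 0"
  shows "(f oo fps_X ^ m) $ j = (if m dvd j then f $ (j div m) else (0::int))"
proof -
  have "(f oo fps_X ^ m) $ j = (\<Sum>i = 0..j. f $ i * (if j = m * i then 1 else 0))"
    by (simp add: fps_compose_nth power_mult[symmetric])
  also have "\<dots> = (\<Sum>i \<in> {0..j} \<inter> {i. j = m * i}. f $ i)"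
    by (simp add: sum.inter_restrict if_distrib cong: if_cong)
  also have "\<dots> = (if m dvd j then f $ (j div m) else 0)"
  proof (cases "m dvd j")
    case True
    then obtain n where j: "j = m * n" by blast
    have "n \<le> j" using assms j by simp
    then have "{0..j} \<inter> {i. j = m * i} = {n}" using j assms by auto
    then show ?thesis using True j assms by simp
  next
    case False
    then have "{0..j} \<inter> {i. j = m * i} = {}" by auto
    then show ?thesis using False by simp
  qed
  finally show ?thesis .
qed

lemma F_Suc:
  assumes "m > 0"
  shows "F m (Suc N) = (1 + fps_X) * ((F m N ^ m) oo fps_X ^ m)"
proof -
  have X0: "(fps_X ^ m :: int fps) $ 0 = 0" using assms by simp
  have fac: "(1 + fps_X ^ (m ^ Suc k) :: int fps) ^ (m ^ Suc k) = ((1 + fps_X ^ (m ^ k)) ^ (m ^ k) oo fps_X ^ m) ^ m"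
    for k
  proof -
    have "(1 + fps_X ^ (m ^ k) :: int fps) oo fps_X ^ m = (1 + fps_X ^ (m ^ Suc k) :: int fps)"
      by (simp add: fps_compose_add_distrib fps_X_power_compose[OF X0] power_mult[symmetric] mult.commute)
    moreover have "(1 + fps_X ^ (m ^ k) :: int fps) ^ (m ^ k) oo fps_X ^ m = ((1 + fps_X ^ (m ^ k)) oo fps_X ^ m) ^ (m ^ k)"
      by (rule fps_compose_power[OF X0, symmetric])
    ultimately have "((1 + fps_X ^ (m ^ k) :: int fps) ^ (m ^ k) oo fps_X ^ m) ^ m = ((1 + fps_X ^ (m ^ Suc k)) ^ (m ^ k)) ^ m"
      by simp
    also have "\<dots> = (1 + fps_X ^ (m ^ Suc k)) ^ (m ^ Suc k)"
      by (simp add: power_mult[symmetric] mult.commute)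
    finally show ?thesis by simp
  qed
  have "F m (Suc N) = (1 + fps_X) * (\<Prod>k\<le>N. (1 + fps_X ^ (m ^ Suc k)) ^ (m ^ Suc k))"
    unfolding F_def by (subst prod.atMost_Suc_shift) simp
  also have "(\<Prod>k\<le>N. (1 + fps_X ^ (m ^ Suc k) :: int fps) ^ (m ^ Suc k)) = (\<Prod>k\<le>N. ((1 + fps_X ^ (m ^ k)) ^ (m ^ k) oo fps_X ^ m) ^ m)"
    by (rule prod.cong[OF refl]) (rule fac)
  also have "\<dots> = (\<Prod>k\<le>N. ((1 + fps_X ^ (m ^ k)) ^ (m ^ k) oo fps_X ^ m)) ^ m"
    by (simp add: prod_power_distrib)
  also have "\<dots> = (F m N oo fps_X ^ m) ^ m"
    unfolding F_def by (simp add: fps_compose_prod_distrib[OF X0])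
  also have "\<dots> = F m N ^ m oo fps_X ^ m" by (simp add: fps_compose_power[OF X0])
  finally show ?thesis .
qed

lemma part2:
  assumes "m \<ge> 2"
  shows "m_convolutive m (a m)"
proof -
  have m0: "m > 0" using assms by simp
  define G where "G = Abs_fps (\<lambda>n. F m n $ n)"
  have PhiA: "Phi (Abs_fps (a m)) = G" by (rule fps_ext) (simp add: G_def a_F)
  have key: "F m (m * n) $ (m * n) = (G ^ m) $ n" for n
  proof -
    define N where "N = m * n"
    have nN: "n \<le> N" using m0 by (simp add: N_def)
    have "F m (m * n) $ (m * n) = F m (Suc N) $ (m * n)"
      using F_stab[OF assms, of "m * n" "Suc N"] by (simp add: N_def)
    also have "\<dots> = ((F m N ^ m) oo fps_X ^ m) $ (m * n) + (fps_X * ((F m N ^ m) oo fps_X ^ m)) $ (m * n)"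
      by (simp add: F_Suc[OF m0] distrib_right)
    also have "(fps_X * ((F m N ^ m) oo fps_X ^ m)) $ (m * n) = 0"
    proof (cases n)
      case 0 then show ?thesis by simp
    next
      case (Suc n')
      have "\<not> m dvd (m * n - 1)"
      proof
        assume "m dvd m * n - 1"
        moreover have "m dvd m * n" by simp
        moreover have "m * n \<ge> 1" using Suc m0 by simp
        ultimately have "m dvd 1" by (metis dvd_diff_nat diff_diff_cancel)
        then show False using assms by simp
      qed
      then show ?thesis using fps_X_power_mult_nth[of 1 "(F m N ^ m) oo fps_X ^ m" "m * n"] Suc m0
        by (simp add: compose_Xm_nth[OF m0])
    qed
    also have "((F m N ^ m) oo fps_X ^ m) $ (m * n) = (F m N ^ m) $ n"
      using m0 by (simp add: compose_Xm_nth)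
    also have "(F m N ^ m) $ n = (G ^ m) $ n"
    proof -
      have "agree (F m N) G n" unfolding agree_def G_def
      proof (intro allI impI)
        fix i assume "i \<le> n"
        then have "i \<le> N" using nN by simp
        then show "F m N $ i = Abs_fps (\<lambda>n. F m n $ n) $ i" using F_stab[OF assms, of i N] by simp
      qed
      then show ?thesis using agree_power[of "F m N" G n m] by (simp add: agree_def)
    qed
    finally show ?thesis by simp
  qed
  have "Phi (Abs_fps (\<lambda>n. a m (m * n))) = Phi (Abs_fps (a m) ^ m)"
    by (rule fps_ext) (simp add: Phi_power PhiA a_F key)
  then show ?thesis unfolding m_convolutive_def by (rule Phi_inj)
qed


theorem theorem5p2:
  fixes m :: nat
  assumes "m \<ge> 2"
  shows "(\<exists>f. bij_betw f (A_div m) (A_tuples m) \<and>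
            (\<forall>\<pi>\<in>A_div m. weight m \<pi> = m * (\<Sum>l\<leftarrow>f \<pi>. weight m l) \<and>
                           len \<pi> = (\<Sum>l\<leftarrow>f \<pi>. len l)))
         \<and> m_convolutive m (a m)"
  using part1[OF assms] part2[OF assms] by blast

end
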